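(* For every set $\Gamma\cup\{\varphi\}$ of formulas over $\Sigma^\circ$: if $\Gamma\vdash_{\bf mbCcl}\varphi$ then $\Gamma\vDash^{\mathsf{RN}}_{\mathcal{M}_{\bf mbCcl}}\varphi$.
   Context: $\Sigma^\circ$ is the signature with unary $\neg,\circ$ and binary $\wedge,\vee,\to$; formulas are built from a denumerable set of propositional variables. ${\bf mbCcl}$ is the Hilbert calculus with Modus Ponens as only rule and axiom schemata: (Ax1) $\alpha\to(\beta\to\alpha)$; (Ax2) $(\alpha\to(\beta\to\gamma))\to((\alpha\to\beta)\to(\alpha\to\gamma))$; (Ax3) $\alpha\to(\beta\to(\alpha\wedge\beta))$; (Ax4) $(\alpha\wedge\beta)\to\alpha$; (Ax5) $(\alpha\wedge\beta)\to\beta$; (Ax6) $\alpha\to(\alpha\vee\beta)$; (Ax7) $\beta\to(\alpha\vee\beta)$; (Ax8) $(\alpha\to\gamma)\to((\beta\to\gamma)\to((\alpha\vee\beta)\to\gamma))$; (Ax9) $\alpha\vee\neg\alpha$; $\alpha\vee(\alpha\to\beta)$; (bc1) $\circ\alpha\to(\alpha\to(\neg\alpha\to\beta))$; (cl) $\neg(\alpha\wedge\neg\alpha)\to\circ\alpha$. $\Gamma\vdash_{\bf mbCcl}\varphi$ means derivability from $\Gamma$. $\mathcal{A}_{\bf mbCcl}$ is the $\Sigma^\circ$-multialgebra with universe $\{F,t,T\}$, $D=\{t,T\}$, $U=\{F\}$, and multioperations: $x\tilde\vee y=U$ if $x=y=F$, otherwise $D$; $x\tilde\wedge y=U$ if $F\in\{x,y\}$,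 otherwise $D$; $\tilde\neg F=D$, $\tilde\neg t=D$, $\tilde\neg T=U$; $x\tilde\to y=D$ if $x=F$, $x\tilde\to F=U$ if $x\in\{t,T\}$, $x\tilde\to y=D$ if $x,y\in\{t,T\}$; $\tilde\circ F=D$, $\tilde\circ t=U$, $\tilde\circ T=D$. A valuation is a map $\nu$ from formulas to $\{F,t,T\}$ with $\nu(\#\alpha)\in\tilde\#\nu(\alpha)$ for unary $\#$ and $\nu(\alpha\#\beta)\in\nu(\alpha)\tilde\#\nu(\beta)$ for binary $\#$. $\mathcal{F}_{\bf mbCcl}$ is the set of valuations $\nu$ such that $\nu(\alpha)=t$ implies $\nu(\alpha\wedge\neg\alpha)=T$, for every formula $\alpha$. $\mathcal{M}_{\bf mbCcl}=(\mathcal{A}_{\bf mbCcl},D,\mathcal{F}_{\bf mbCcl})$, and $\Gamma\vDash^{\mathsf{RN}}_{\mathcal{M}_{\bf mbCcl}}\varphi$ iff every $\nu\in\mathcal{F}_{\bf mbCcl}$ with $\nu[\Gamma]\subseteq D$ satisfies $\nu(\varphi)\in D$. *)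

theory Defs
  imports Main
begin

datatype fm = Var nat | Neg fm | Circ fm | And fm fm | Or fm fm | Imp fm fm

inductive derivable :: "fm set \<Rightarrow> fm \<Rightarrow> bool" for \<Gamma> :: "fm set" where
  prem: "\<phi> \<in> \<Gamma> \<Longrightarrow> derivable \<Gamma> \<phi>"
| Ax1: "derivable \<Gamma> (Imp a (Imp b a))"
| Ax2: "derivable \<Gamma> (Imp (Imp a (Imp b c)) (Imp (Imp a b) (Imp a c)))"
| Ax3: "derivable \<Gamma> (Imp a (Imp b (And a b)))"
| Ax4: "derivable \<Gamma> (Imp (And a b) a)"
| Ax5: "derivable \<Gamma> (Imp (And a b) b)"
| Ax6: "derivable \<Gamma> (Imp a (Or a b))"
| Ax7: "derivable \<Gamma> (Imp b (Or a b))"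
| Ax8: "derivable \<Gamma> (Imp (Imp a c) (Imp (Imp b c) (Imp (Or a b) c)))"
| Ax9: "derivable \<Gamma> (Or a (Neg a))"
| Ax10: "derivable \<Gamma> (Or a (Imp a b))"
| bc1: "derivable \<Gamma> (Imp (Circ a) (Imp a (Imp (Neg a) b)))"
| cl: "derivable \<Gamma> (Imp (Neg (And a (Neg a))) (Circ a))"
| MP: "derivable \<Gamma> a \<Longrightarrow> derivable \<Gamma> (Imp a b) \<Longrightarrow> derivable \<Gamma> b"

datatype tv = F | t | T

definition Des :: "tv set" where "Des = {t, T}"
definition Und :: "tv set" where "Und = {F}"

definition or_m :: "tv \<Rightarrow> tv \<Rightarrow> tv set" where
  "or_m x y = (if x = F \<and> y = F then Und else Des)"
definition and_m :: "tv \<Rightarrow> tv \<Rightarrow> tv set" where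
  "and_m x y = (if x = F \<or> y = F then Und else Des)"
definition neg_m :: "tv \<Rightarrow> tv set" where
  "neg_m x = (if x = T then Und else Des)"
definition imp_m :: "tv \<Rightarrow> tv \<Rightarrow> tv set" where
  "imp_m x y = (if x = F then Des else if y = F then Und else Des)"
definition circ_m :: "tv \<Rightarrow> tv set" where
  "circ_m x = (if x = t then Und else Des)"

definition valuation :: "(fm \<Rightarrow> tv) \<Rightarrow> bool" where
  "valuation v \<longleftrightarrow>
     (\<forall>a. v (Neg a) \<in> neg_m (v a)) \<and>
     (\<forall>a. v (Circ a) \<in> circ_m (v a)) \<and>
     (\<forall>a b. v (And a b) \<in> and_m (v a) (v b)) \<and>
     (\<forall>a b. v (Or a b) \<in> or_m (v a) (v b)) \<and>
     (\<forall>a b. v (Imp a b) \<in> imp_m (v a) (v b))"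

definition F_mbCcl :: "(fm \<Rightarrow> tv) set" where
  "F_mbCcl = {v. valuation v \<and> (\<forall>a. v a = t \<longrightarrow> v (And a (Neg a)) = T)}"

definition RN_consequence :: "fm set \<Rightarrow> fm \<Rightarrow> bool" where
  "RN_consequence \<Gamma> \<phi> \<longleftrightarrow>
     (\<forall>v \<in> F_mbCcl. v ` \<Gamma> \<subseteq> Des \<longrightarrow> v \<phi> \<in> Des)"

end

theory Submission
  imports Defs
begin

lemma desI: "v x \<in> Des \<longleftrightarrow> v x \<noteq> F"
  by (cases "v x") (auto simp: Des_def)

lemma vimp: "valuation v \<Longrightarrow> v (Imp a b) \<noteq> F \<longleftrightarrow> (v a = F \<or> v b \<noteq> F)"
  proof -
  assume "valuation v"
  then have "v (Imp a b) \<in> imp_m (v a) (v b)" unfolding valuation_def by blast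
  then show ?thesis by (cases "v (Imp a b)"; cases "v a"; cases "v b") (simp_all add: imp_m_def Des_def Und_def)
qed
lemma vand: "valuation v \<Longrightarrow> v (And a b) \<noteq> F \<longleftrightarrow> (v a \<noteq> F \<and> v b \<noteq> F)"
  proof -
  assume "valuation v"
  then have "v (And a b) \<in> and_m (v a) (v b)" unfolding valuation_def by blast
  then show ?thesis by (cases "v (And a b)"; cases "v a"; cases "v b") (simp_all add: and_m_def Des_def Und_def)
qed
lemma vor: "valuation v \<Longrightarrow> v (Or a b) \<noteq> F \<longleftrightarrow> (v a \<noteq> F \<or> v b \<noteq> F)"
  proof -
  assume "valuation v"
  then have "v (Or a b) \<in> or_m (v a) (v b)" unfolding valuation_def by blast
  then show ?thesis by (cases "v (Or a b)"; cases "v a"; cases "v b") (simp_all add: or_m_def Des_def Und_def)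
qed
lemma vneg: "valuation v \<Longrightarrow> v (Neg a) \<noteq> F \<longleftrightarrow> v a \<noteq> T"
  proof -
  assume "valuation v"
  then have "v (Neg a) \<in> neg_m (v a)" unfolding valuation_def by blast
  then show ?thesis by (cases "v (Neg a)"; cases "v a") (simp_all add: neg_m_def Des_def Und_def)
qed
lemma vcirc: "valuation v \<Longrightarrow> v (Circ a) \<noteq> F \<longleftrightarrow> v a \<noteq> t"
  proof -
  assume "valuation v"
  then have "v (Circ a) \<in> circ_m (v a)" unfolding valuation_def by blast
  then show ?thesis by (cases "v (Circ a)"; cases "v a") (simp_all add: circ_m_def Des_def Und_def)
qed

lemma sound1:
  assumes "derivable \<Gamma> \<phi>" "v \<in> F_mbCcl" "v ` \<Gamma> \<subseteq> Des"
  shows "v \<phi> \<noteq> F"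
proof -
  have val: "valuation v" using assms(2) by (simp add: F_mbCcl_def)
  have fc: "\<And>a. v a = t \<Longrightarrow> v (And a (Neg a)) = T"
    using assms(2) by (simp add: F_mbCcl_def)
  note simps = vimp[OF val] vand[OF val] vor[OF val] vneg[OF val] vcirc[OF val]
  show ?thesis using assms(1)
  proof (induction rule: derivable.induct)
    case (prem \<phi>) then have "v \<phi> \<in> Des" using assms(3) by blast
    then show ?case by (simp add: desI)
  next
    case (Ax1 a b) show ?case using simps(1)[of a "Imp b a"] simps(1)[of b a] by blast
  next
    case (Ax2 a b c) show ?case
      using simps(1)[of "Imp a (Imp b c)" "Imp (Imp a b) (Imp a c)"] simps(1)[of a "Imp b c"]
        simps(1)[of "Imp a b" "Imp a c"] simps(1)[of b c] simps(1)[of a b] simps(1)[of a c] by blast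
  next
    case (Ax3 a b) show ?case
      using simps(1)[of a "Imp b (And a b)"] simps(1)[of b "And a b"] simps(2)[of a b] by blast
  next
    case (Ax4 a b) show ?case using simps(1)[of "And a b" a] simps(2)[of a b] by blast
  next
    case (Ax5 a b) show ?case using simps(1)[of "And a b" b] simps(2)[of a b] by blast
  next
    case (Ax6 a b) show ?case using simps(1)[of a "Or a b"] simps(3)[of a b] by blast
  next
    case (Ax7 b a) show ?case using simps(1)[of b "Or a b"] simps(3)[of a b] by blast
  next
    case (Ax8 a c b) show ?case
      using simps(1)[of "Imp a c" "Imp (Imp b c) (Imp (Or a b) c)"] simps(1)[of a c]
        simps(1)[of "Imp b c" "Imp (Or a b) c"] simps(1)[of b c] simps(1)[of "Or a b" c]
        simps(3)[of a b] by blast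
  next
    case (Ax9 a) show ?case using simps(3)[of a "Neg a"] simps(4)[of a] by (cases "v a") auto
  next
    case (Ax10 a b) show ?case using simps(3)[of a "Imp a b"] simps(1)[of a b] by blast
  next
    case (bc1 a b) show ?case
      using simps(1)[of "Circ a" "Imp a (Imp (Neg a) b)"] simps(1)[of a "Imp (Neg a) b"]
        simps(1)[of "Neg a" b] simps(4)[of a] simps(5)[of a] by (cases "v a") auto
  next
    case (cl a) show ?case
      using simps(1)[of "Neg (And a (Neg a))" "Circ a"] simps(4)[of "And a (Neg a)"]
        simps(5)[of a] fc[of a] by (cases "v a") auto
  next
    case (MP a b) then show ?case using simps(1)[of a b] by simp
  qed
qed

theorem mainTheorem3:
  fixes \<Gamma> :: "fm set" and \<phi> :: fm
  assumes "derivable \<Gamma> \<phi>"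
  shows "RN_consequence \<Gamma> \<phi>"
  unfolding RN_consequence_def using sound1[OF assms] by (simp add: desI)

end
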